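(* Under TLMP and stochastic rolling-window dispatch as described in the context, for all realizations of stochastic demands and probabilistic load forecasts, it is optimal for a price-taking ESR $i$ to bid with its true benefit/cost curves and true operational parameters; that is, the truthful bidding parameter $\boldsymbol\theta_i^*$ maximizes $\Pi_i^{TLMP}(\boldsymbol\theta_i)$ over bidding parameters $\boldsymbol\theta_i$.
   Context: Single-bus market with $N$ ESRs over horizon $\mathscr H=\{1,\dots,T\}$. In each interval $t$ the operator solves a scenario-based stochastic dispatch problem over window $\{t,\dots,t+W-1\}$ (minimizing interval-$t$ bid cost plus probability-weighted bid cost over $K$ forecast demand scenarios, subject to power balance with realized demand $d_t$ and forecast scenario demands, SOC transitions $E_{it}-E_{i(t-1)}=\xi^C_ig^C_{it}-g^D_{it}/\xi^D_i$, SOC, power and ramping limits, with initial conditions given by the previously realized dispatch), using the bids submitted by the ESRs; the interval-$t$ solution is the realized dispatch. The TLMP of ESR $i$ in interval $t$ is $\pi_{it}^{TLMP\text{-}C}=\lambda^*_t-\xi_i^{C}\phi^*_{it}-\Delta_{it}^{C*}$ (charging) and $\pi_{it}^{TLMP\text{-}D}=\lambda^*_t-\phi^*_{it}/\xi_i^{D}+\Delta_{it}^{D*}$ (discharging), where $\lambda_t^*$ is the optimal multiplier of the interval-$t$ power balance, $\phi^*_{it}$ that of ESR $i$'s interval-$t$ SOC transition equation, and $\Delta_{it}^{C*}=-(\bar{\mu}_{it}^{C*}-\underline{\mu}_{it}^{C*})+\sum_{k=1}^K(\bar{\mu}_{i(t+1)k}^{C*}-\underline{\mu}_{i(t+1)k}^{C*})$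 with $\bar\mu_{it},\underline\mu_{it}$ the multipliers of the ramp constraints between $t-1$ and $t$ and $\bar\mu_{i(t+1)k},\underline\mu_{i(t+1)k}$ those between $t$ and $t+1$ in scenario $k$ ($\Delta^{D*}_{it}$ analogous). ESR $i$ submits bids parameterized by $\boldsymbol\theta_i=(c_i^{D},c_i^{C},\bar{r}_i^{D},\bar{r}_i^{C},\underline{r}_i^{D},\underline{r}_i^{C},\bar{E}_i,\underline{E}_i,\bar{g}_i^{D},\bar{g}_i^{C},\underline{g}_i^{D},\underline{g}_i^{C})$ (bid-in marginal costs, ramp limits, SOC limits, power limits), giving bid curves $f^C_{it}(\cdot|\boldsymbol\theta_i),f^D_{it}(\cdot|\boldsymbol\theta_i)$; $\boldsymbol\theta_i^*$ denotes the true parameters, and the true benefit/cost curves are $q^C_{it}=f^C_{it}(\cdot|\boldsymbol\theta_i^* )$, $q^D_{it}=f^D_{it}(\cdot|\boldsymbol\theta_i^* )$. Let $g^{C*}_{it}(\boldsymbol\theta_i),g^{D*}_{it}(\boldsymbol\theta_i)$ be the resulting dispatch. Price-taking: the ESR treats the TLMP sequence as fixed (independent of $\boldsymbol\theta_i$) and evaluates the profit $\Pi_i^{TLMP}(\boldsymbol\theta_i)=\sum_{t=1}^T\big(\pi_{it}^{TLMP\text{-}D}g_{it}^{D*}(\boldsymbol\theta_i)-\pi_{it}^{TLMP\text{-}C}g_{it}^{C*}(\boldsymbol\theta_i)-q_{it}^{D}(g^{D*}_{it}(\boldsymbol\theta_i))+q_{it}^{C}(g^{C*}_{it}(\boldsymbol\theta_i))\big)$;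 the ESR requires its dispatch to lie in its true feasible operating region (true ramp, SOC and power limits), since otherwise it cannot follow the dispatch. *)

theory Defs
  imports Complex_Main
begin

record bid =
  cD    :: real   (* bid-in marginal cost of discharging *)
  cC    :: real   (* bid-in marginal benefit of charging *)
  rDup  :: real   (* ramp-up limit, discharging *)
  rCup  :: real   (* ramp-up limit, charging *)
  rDdn  :: real   (* ramp-down limit, discharging *)
  rCdn  :: real   (* ramp-down limit, charging *)
  Emax  :: real
  Emin  :: real
  gDmax :: real
  gCmax :: real
  gDmin :: real
  gCmin :: real

definition bidD :: "bid \<Rightarrow> real \<Rightarrow> real" where "bidD th g = cD th * g"
definition bidC :: "bid \<Rightarrow> real \<Rightarrow> real" where "bidC th g = cC th * g"

section \<open>Market data (one realization of demands and forecasts)\<close>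

record market =
  nN    :: nat                               (* number of ESRs, indexed 0..<N *)
  nK    :: nat                               (* number of scenarios, 0..<K *)
  nW    :: nat
  nT    :: nat                               (* horizon T, intervals 1..T *)
  xiC   :: "nat \<Rightarrow> real"                   (* charging efficiency of ESR i *)
  xiD   :: "nat \<Rightarrow> real"                   (* discharging efficiency of ESR i *)
  prob  :: "nat \<Rightarrow> nat \<Rightarrow> real"           (* prob t k: probability of scenario k in window at t *)
  dem   :: "nat \<Rightarrow> real"                   (* realized demand d_t *)
  fdem  :: "nat \<Rightarrow> nat \<Rightarrow> nat \<Rightarrow> real"   (* fdem t tau k: forecast demand at tau, scenario k, issued at t *)
  Einit :: "nat \<Rightarrow> real"                   (* initial SOC E_{i0} *)
  gCinit :: "nat \<Rightarrow> real"
  gDinit :: "nat \<Rightarrow> real"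

definition win :: "market \<Rightarrow> nat \<Rightarrow> nat set" where
  "win M t = {Suc t..<t + nW M}"

record wdec =
  wgC  :: "nat \<Rightarrow> real"
  wgD  :: "nat \<Rightarrow> real"
  wE   :: "nat \<Rightarrow> real"
  wgCs :: "nat \<Rightarrow> nat \<Rightarrow> nat \<Rightarrow> real"     (* g^C_{i tau k} *)
  wgDs :: "nat \<Rightarrow> nat \<Rightarrow> nat \<Rightarrow> real"
  wEs  :: "nat \<Rightarrow> nat \<Rightarrow> nat \<Rightarrow> real"

definition prevS :: "nat \<Rightarrow> (nat \<Rightarrow> real) \<Rightarrow> (nat \<Rightarrow> nat \<Rightarrow> nat \<Rightarrow> real) \<Rightarrow> nat \<Rightarrow> nat \<Rightarrow> nat \<Rightarrow> real" where
  "prevS t v vs i tau k = (if tau = Suc t then v i else vs i (tau - 1) k)"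

text \<open>Constraints of the interval-t problem, given the bid profile b and the initial
  conditions pE, pC, pD (previously realized SOC and dispatch).\<close>
definition wfeas :: "market \<Rightarrow> (nat \<Rightarrow> bid) \<Rightarrow> nat \<Rightarrow> (nat \<Rightarrow> real) \<Rightarrow> (nat \<Rightarrow> real) \<Rightarrow> (nat \<Rightarrow> real) \<Rightarrow> wdec \<Rightarrow> bool" where
  "wfeas M b t pE pC pD x \<longleftrightarrow>
     (\<Sum>i<nN M. wgD x i - wgC x i) = dem M t \<and>
     (\<forall>i<nN M.
        wE x i - pE i = xiC M i * wgC x i - wgD x i / xiD M i \<and>
        Emin (b i) \<le> wE x i \<and> wE x i \<le> Emax (b i) \<and>
        gCmin (b i) \<le> wgC x i \<and> wgC x i \<le> gCmax (b i) \<and>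
        gDmin (b i) \<le> wgD x i \<and> wgD x i \<le> gDmax (b i) \<and>
        wgC x i - pC i \<le> rCup (b i) \<and> pC i - wgC x i \<le> rCdn (b i) \<and>
        wgD x i - pD i \<le> rDup (b i) \<and> pD i - wgD x i \<le> rDdn (b i)) \<and>
     (\<forall>tau\<in>win M t. \<forall>k<nK M.
        (\<Sum>i<nN M. wgDs x i tau k - wgCs x i tau k) = fdem M t tau k \<and>
        (\<forall>i<nN M.
          wEs x i tau k - prevS t (wE x) (wEs x) i tau k
            = xiC M i * wgCs x i tau k - wgDs x i tau k / xiD M i \<and>
          Emin (b i) \<le> wEs x i tau k \<and> wEs x i tau k \<le> Emax (b i) \<and>
          gCmin (b i) \<le> wgCs x i tau k \<and> wgCs x i tau k \<le> gCmax (b i) \<and>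
          gDmin (b i) \<le> wgDs x i tau k \<and> wgDs x i tau k \<le> gDmax (b i) \<and>
          wgCs x i tau k - prevS t (wgC x) (wgCs x) i tau k \<le> rCup (b i) \<and>
          prevS t (wgC x) (wgCs x) i tau k - wgCs x i tau k \<le> rCdn (b i) \<and>
          wgDs x i tau k - prevS t (wgD x) (wgDs x) i tau k \<le> rDup (b i) \<and>
          prevS t (wgD x) (wgDs x) i tau k - wgDs x i tau k \<le> rDdn (b i)))"

definition wcost :: "market \<Rightarrow> (nat \<Rightarrow> bid) \<Rightarrow> nat \<Rightarrow> wdec \<Rightarrow> real" where
  "wcost M b t x =
     (\<Sum>i<nN M. bidD (b i) (wgD x i) - bidC (b i) (wgC x i)) +
     (\<Sum>k<nK M. prob M t k *
        (\<Sum>tau\<in>win M t. \<Sum>i<nN M. bidD (b i) (wgDs x i tau k) - bidC (b i) (wgCs x i tau k)))"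

definition wopt :: "market \<Rightarrow> (nat \<Rightarrow> bid) \<Rightarrow> nat \<Rightarrow> (nat \<Rightarrow> real) \<Rightarrow> (nat \<Rightarrow> real) \<Rightarrow> (nat \<Rightarrow> real) \<Rightarrow> wdec \<Rightarrow> bool" where
  "wopt M b t pE pC pD x \<longleftrightarrow> wfeas M b t pE pC pD x \<and>
     (\<forall>y. wfeas M b t pE pC pD y \<longrightarrow> wcost M b t x \<le> wcost M b t y)"

record wmult =
  lam   :: real                          (* interval-t power balance *)
  lams  :: "nat \<Rightarrow> nat \<Rightarrow> real"          (* scenario power balance, tau k *)
  phi   :: "nat \<Rightarrow> real"                 (* interval-t SOC transition, by i *)
  phis  :: "nat \<Rightarrow> nat \<Rightarrow> nat \<Rightarrow> real"
  eUp   :: "nat \<Rightarrow> real"                 (* SOC limits *)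
  eDn   :: "nat \<Rightarrow> real"
  eUps  :: "nat \<Rightarrow> nat \<Rightarrow> nat \<Rightarrow> real"
  eDns  :: "nat \<Rightarrow> nat \<Rightarrow> nat \<Rightarrow> real"
  pCup  :: "nat \<Rightarrow> real"                 (* power limits *)
  pCdn  :: "nat \<Rightarrow> real"
  pDup  :: "nat \<Rightarrow> real"
  pDdn  :: "nat \<Rightarrow> real"
  pCups :: "nat \<Rightarrow> nat \<Rightarrow> nat \<Rightarrow> real"
  pCdns :: "nat \<Rightarrow> nat \<Rightarrow> nat \<Rightarrow> real"
  pDups :: "nat \<Rightarrow> nat \<Rightarrow> nat \<Rightarrow> real"
  pDdns :: "nat \<Rightarrow> nat \<Rightarrow> nat \<Rightarrow> real"
  mCup  :: "nat \<Rightarrow> real"                 (* ramp constraints between t-1 and t: mubar, mulow *)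
  mCdn  :: "nat \<Rightarrow> real"
  mDup  :: "nat \<Rightarrow> real"
  mDdn  :: "nat \<Rightarrow> real"
  mCups :: "nat \<Rightarrow> nat \<Rightarrow> nat \<Rightarrow> real"  (* ramp between tau-1 and tau in scenario k *)
  mCdns :: "nat \<Rightarrow> nat \<Rightarrow> nat \<Rightarrow> real"
  mDups :: "nat \<Rightarrow> nat \<Rightarrow> nat \<Rightarrow> real"
  mDdns :: "nat \<Rightarrow> nat \<Rightarrow> nat \<Rightarrow> real"

text \<open>Equalities: power balance written as (supply - demand) = 0 with term
  -lambda*(...); SOC transition written as E_t - E_{t-1} - xi^C g^C + g^D/xi^D = 0 with term
  +phi*(...). Inequalities written as h(x) <= 0 with term +mu*h(x).\<close>
definition wlag :: "market \<Rightarrow> (nat \<Rightarrow> bid) \<Rightarrow> nat \<Rightarrow> (nat \<Rightarrow> real) \<Rightarrow> (nat \<Rightarrow> real) \<Rightarrow> (nat \<Rightarrow> real) \<Rightarrow> wdec \<Rightarrow> wmult \<Rightarrow> real" where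
  "wlag M b t pE pC pD x m =
     wcost M b t x
     - lam m * ((\<Sum>i<nN M. wgD x i - wgC x i) - dem M t)
     - (\<Sum>k<nK M. \<Sum>tau\<in>win M t. lams m tau k *
          ((\<Sum>i<nN M. wgDs x i tau k - wgCs x i tau k) - fdem M t tau k))
     + (\<Sum>i<nN M.
          phi m i * (wE x i - pE i - xiC M i * wgC x i + wgD x i / xiD M i)
        + eUp m i * (wE x i - Emax (b i)) + eDn m i * (Emin (b i) - wE x i)
        + pCup m i * (wgC x i - gCmax (b i)) + pCdn m i * (gCmin (b i) - wgC x i)
        + pDup m i * (wgD x i - gDmax (b i)) + pDdn m i * (gDmin (b i) - wgD x i)
        + mCup m i * (wgC x i - pC i - rCup (b i)) + mCdn m i * (pC i - wgC x i - rCdn (b i))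
        + mDup m i * (wgD x i - pD i - rDup (b i)) + mDdn m i * (pD i - wgD x i - rDdn (b i)))
     + (\<Sum>k<nK M. \<Sum>tau\<in>win M t. \<Sum>i<nN M.
          phis m i tau k * (wEs x i tau k - prevS t (wE x) (wEs x) i tau k
                             - xiC M i * wgCs x i tau k + wgDs x i tau k / xiD M i)
        + eUps m i tau k * (wEs x i tau k - Emax (b i)) + eDns m i tau k * (Emin (b i) - wEs x i tau k)
        + pCups m i tau k * (wgCs x i tau k - gCmax (b i)) + pCdns m i tau k * (gCmin (b i) - wgCs x i tau k)
        + pDups m i tau k * (wgDs x i tau k - gDmax (b i)) + pDdns m i tau k * (gDmin (b i) - wgDs x i tau k)
        + mCups m i tau k * (wgCs x i tau k - prevS t (wgC x) (wgCs x) i tau k - rCup (b i))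
        + mCdns m i tau k * (prevS t (wgC x) (wgCs x) i tau k - wgCs x i tau k - rCdn (b i))
        + mDups m i tau k * (wgDs x i tau k - prevS t (wgD x) (wgDs x) i tau k - rDup (b i))
        + mDdns m i tau k * (prevS t (wgD x) (wgDs x) i tau k - wgDs x i tau k - rDdn (b i)))"

text \<open>(x, m) is an optimal primal solution together with optimal multipliers:
  primal feasibility, dual feasibility, complementary slackness, and x minimizes the
  Lagrangian (Lagrange multiplier / KKT characterization; for this LP equivalent to
  x primal optimal and m dual optimal).\<close>
definition wkkt :: "market \<Rightarrow> (nat \<Rightarrow> bid) \<Rightarrow> nat \<Rightarrow> (nat \<Rightarrow> real) \<Rightarrow> (nat \<Rightarrow> real) \<Rightarrow> (nat \<Rightarrow> real) \<Rightarrow> wdec \<Rightarrow> wmult \<Rightarrow> bool" where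
  "wkkt M b t pE pC pD x m \<longleftrightarrow>
     wopt M b t pE pC pD x \<and>
     (\<forall>i<nN M.
        0 \<le> eUp m i \<and> 0 \<le> eDn m i \<and> 0 \<le> pCup m i \<and> 0 \<le> pCdn m i \<and>
        0 \<le> pDup m i \<and> 0 \<le> pDdn m i \<and> 0 \<le> mCup m i \<and> 0 \<le> mCdn m i \<and>
        0 \<le> mDup m i \<and> 0 \<le> mDdn m i \<and>
        eUp m i * (wE x i - Emax (b i)) = 0 \<and> eDn m i * (Emin (b i) - wE x i) = 0 \<and>
        pCup m i * (wgC x i - gCmax (b i)) = 0 \<and> pCdn m i * (gCmin (b i) - wgC x i) = 0 \<and>
        pDup m i * (wgD x i - gDmax (b i)) = 0 \<and> pDdn m i * (gDmin (b i) - wgD x i) = 0 \<and>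
        mCup m i * (wgC x i - pC i - rCup (b i)) = 0 \<and> mCdn m i * (pC i - wgC x i - rCdn (b i)) = 0 \<and>
        mDup m i * (wgD x i - pD i - rDup (b i)) = 0 \<and> mDdn m i * (pD i - wgD x i - rDdn (b i)) = 0) \<and>
     (\<forall>tau\<in>win M t. \<forall>k<nK M. \<forall>i<nN M.
        0 \<le> eUps m i tau k \<and> 0 \<le> eDns m i tau k \<and> 0 \<le> pCups m i tau k \<and> 0 \<le> pCdns m i tau k \<and>
        0 \<le> pDups m i tau k \<and> 0 \<le> pDdns m i tau k \<and> 0 \<le> mCups m i tau k \<and> 0 \<le> mCdns m i tau k \<and>
        0 \<le> mDups m i tau k \<and> 0 \<le> mDdns m i tau k \<and>
        eUps m i tau k * (wEs x i tau k - Emax (b i)) = 0 \<and>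
        eDns m i tau k * (Emin (b i) - wEs x i tau k) = 0 \<and>
        pCups m i tau k * (wgCs x i tau k - gCmax (b i)) = 0 \<and>
        pCdns m i tau k * (gCmin (b i) - wgCs x i tau k) = 0 \<and>
        pDups m i tau k * (wgDs x i tau k - gDmax (b i)) = 0 \<and>
        pDdns m i tau k * (gDmin (b i) - wgDs x i tau k) = 0 \<and>
        mCups m i tau k * (wgCs x i tau k - prevS t (wgC x) (wgCs x) i tau k - rCup (b i)) = 0 \<and>
        mCdns m i tau k * (prevS t (wgC x) (wgCs x) i tau k - wgCs x i tau k - rCdn (b i)) = 0 \<and>
        mDups m i tau k * (wgDs x i tau k - prevS t (wgD x) (wgDs x) i tau k - rDup (b i)) = 0 \<and>
        mDdns m i tau k * (prevS t (wgD x) (wgDs x) i tau k - wgDs x i tau k - rDdn (b i)) = 0) \<and>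
     (\<forall>y. wlag M b t pE pC pD x m \<le> wlag M b t pE pC pD y m)"

text \<open>Realized SOC / dispatch sequences of ESR i under run X; index 0 is the initial condition.\<close>
definition seqE :: "market \<Rightarrow> (nat \<Rightarrow> wdec) \<Rightarrow> nat \<Rightarrow> nat \<Rightarrow> real" where
  "seqE M X i t = (if t = 0 then Einit M i else wE (X t) i)"
definition dispC :: "market \<Rightarrow> (nat \<Rightarrow> wdec) \<Rightarrow> nat \<Rightarrow> nat \<Rightarrow> real" where
  "dispC M X i t = (if t = 0 then gCinit M i else wgC (X t) i)"
definition dispD :: "market \<Rightarrow> (nat \<Rightarrow> wdec) \<Rightarrow> nat \<Rightarrow> nat \<Rightarrow> real" where
  "dispD M X i t = (if t = 0 then gDinit M i else wgD (X t) i)"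

definition rw_run :: "market \<Rightarrow> (nat \<Rightarrow> bid) \<Rightarrow> (nat \<Rightarrow> wdec) \<Rightarrow> bool" where
  "rw_run M b X \<longleftrightarrow> (\<forall>t\<in>{1..nT M}.
     wopt M b t (\<lambda>i. seqE M X i (t - 1)) (\<lambda>i. dispC M X i (t - 1)) (\<lambda>i. dispD M X i (t - 1)) (X t))"

definition rw_run_mult :: "market \<Rightarrow> (nat \<Rightarrow> bid) \<Rightarrow> (nat \<Rightarrow> wdec) \<Rightarrow> (nat \<Rightarrow> wmult) \<Rightarrow> bool" where
  "rw_run_mult M b X Mu \<longleftrightarrow> (\<forall>t\<in>{1..nT M}.
     wkkt M b t (\<lambda>i. seqE M X i (t - 1)) (\<lambda>i. dispC M X i (t - 1)) (\<lambda>i. dispD M X i (t - 1)) (X t) (Mu t))"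

definition DeltaC :: "market \<Rightarrow> wmult \<Rightarrow> nat \<Rightarrow> nat \<Rightarrow> real" where
  "DeltaC M m t i = - (mCup m i - mCdn m i) +
     (if 2 \<le> nW M then (\<Sum>k<nK M. mCups m i (Suc t) k - mCdns m i (Suc t) k) else 0)"
definition DeltaD :: "market \<Rightarrow> wmult \<Rightarrow> nat \<Rightarrow> nat \<Rightarrow> real" where
  "DeltaD M m t i = - (mDup m i - mDdn m i) +
     (if 2 \<le> nW M then (\<Sum>k<nK M. mDups m i (Suc t) k - mDdns m i (Suc t) k) else 0)"

definition tlmpC :: "market \<Rightarrow> wmult \<Rightarrow> nat \<Rightarrow> nat \<Rightarrow> real" where
  "tlmpC M m t i = lam m - xiC M i * phi m i - DeltaC M m t i"
definition tlmpD :: "market \<Rightarrow> wmult \<Rightarrow> nat \<Rightarrow> nat \<Rightarrow> real" where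
  "tlmpD M m t i = lam m - phi m i / xiD M i + DeltaD M m t i"

text \<open>sC, sD: dispatch sequences of ESR i (index 0 = initial condition).\<close>
definition true_feasible :: "market \<Rightarrow> nat \<Rightarrow> bid \<Rightarrow> (nat \<Rightarrow> real) \<Rightarrow> (nat \<Rightarrow> real) \<Rightarrow> bool" where
  "true_feasible M i th sC sD \<longleftrightarrow> sC 0 = gCinit M i \<and> sD 0 = gDinit M i \<and>
     (\<exists>sE. sE 0 = Einit M i \<and> (\<forall>t\<in>{1..nT M}.
        sE t - sE (t - 1) = xiC M i * sC t - sD t / xiD M i \<and>
        Emin th \<le> sE t \<and> sE t \<le> Emax th \<and>
        gCmin th \<le> sC t \<and> sC t \<le> gCmax th \<and>
        gDmin th \<le> sD t \<and> sD t \<le> gDmax th \<and>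
        sC t - sC (t - 1) \<le> rCup th \<and> sC (t - 1) - sC t \<le> rCdn th \<and>
        sD t - sD (t - 1) \<le> rDup th \<and> sD (t - 1) - sD t \<le> rDdn th))"

text \<open>Profit of ESR i with true parameters thstar (q^D = f^D(.|thstar), q^C = f^C(.|thstar)),
  given fixed price sequences piC, piD.\<close>
definition profit :: "market \<Rightarrow> bid \<Rightarrow> (nat \<Rightarrow> real) \<Rightarrow> (nat \<Rightarrow> real) \<Rightarrow> (nat \<Rightarrow> real) \<Rightarrow> (nat \<Rightarrow> real) \<Rightarrow> real" where
  "profit M thstar piC piD sC sD =
     (\<Sum>t\<in>{1..nT M}. piD t * sD t - piC t * sC t - bidD thstar (sD t) + bidC thstar (sC t))"

end

theory Submission
  imports Defs
begin

lemma sum_upd: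
  fixes f h :: "nat \<Rightarrow> real"
  assumes "i < n" "\<And>j. j \<noteq> i \<Longrightarrow> f j = h j"
  shows "(\<Sum>j<n. f j) = (\<Sum>j<n. h j) + (f i - h i)"
proof -
  have "(\<Sum>j<n. f j) = f i + (\<Sum>j\<in>{..<n}-{i}. f j)"
    using assms(1) by (simp add: sum.remove)
  moreover have "(\<Sum>j<n. h j) = h i + (\<Sum>j\<in>{..<n}-{i}. h j)"
    using assms(1) by (simp add: sum.remove)
  moreover have "(\<Sum>j\<in>{..<n}-{i}. f j) = (\<Sum>j\<in>{..<n}-{i}. h j)"
    using assms(2) by (intro sum.cong) auto
  ultimately show ?thesis by simp
qed

lemma sum_upd2:
  fixes f h :: "nat \<Rightarrow> real"
  assumes "i < n" "\<And>j. j \<noteq> i \<Longrightarrow> f j = h j" "f i = h i + c"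
  shows "(\<Sum>j<n. f j) = (\<Sum>j<n. h j) + c"
  using sum_upd[of i n f h] assms by simp

lemma win_Suc: "(Suc t \<in> win M t) = (2 \<le> nW M)"
  unfolding win_def by auto

lemma win_delta: "(\<Sum>tau\<in>win M t. if tau = Suc t then (c::real) else 0) = (if 2 \<le> nW M then c else 0)"
proof -
  have "finite (win M t)" unfolding win_def by simp
  then show ?thesis by (simp add: sum.delta win_Suc)
qed

lemma lagD:
  fixes x :: wdec and v :: real
  assumes i: "i < nN M"
  defines "y \<equiv> x\<lparr>wgD := (wgD x)(i := v)\<rparr>"
  shows "wlag M b t pE pC pD y m = wlag M b t pE pC pD x m
     + (v - wgD x i) * (cD (b i) - tlmpD M m t i + pDup m i - pDdn m i)"
proof -
  let ?g = "wgD x i"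
  have A1: "(\<Sum>j<nN M. bidD (b j) (wgD y j) - bidC (b j) (wgC y j))
      = (\<Sum>j<nN M. bidD (b j) (wgD x j) - bidC (b j) (wgC x j)) + (v - ?g) * cD (b i)"
    by (rule sum_upd2[OF i]) (auto simp: y_def bidD_def algebra_simps)
  have A2: "(\<Sum>j<nN M. wgD y j - wgC y j) = (\<Sum>j<nN M. wgD x j - wgC x j) + (v - ?g)"
    by (rule sum_upd2[OF i]) (auto simp: y_def algebra_simps)
  have A3: "(\<Sum>j<nN M.
          phi m j * (wE y j - pE j - xiC M j * wgC y j + wgD y j / xiD M j)
        + eUp m j * (wE y j - Emax (b j)) + eDn m j * (Emin (b j) - wE y j)
        + pCup m j * (wgC y j - gCmax (b j)) + pCdn m j * (gCmin (b j) - wgC y j)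
        + pDup m j * (wgD y j - gDmax (b j)) + pDdn m j * (gDmin (b j) - wgD y j)
        + mCup m j * (wgC y j - pC j - rCup (b j)) + mCdn m j * (pC j - wgC y j - rCdn (b j))
        + mDup m j * (wgD y j - pD j - rDup (b j)) + mDdn m j * (pD j - wgD y j - rDdn (b j)))
     = (\<Sum>j<nN M.
          phi m j * (wE x j - pE j - xiC M j * wgC x j + wgD x j / xiD M j)
        + eUp m j * (wE x j - Emax (b j)) + eDn m j * (Emin (b j) - wE x j)
        + pCup m j * (wgC x j - gCmax (b j)) + pCdn m j * (gCmin (b j) - wgC x j)
        + pDup m j * (wgD x j - gDmax (b j)) + pDdn m j * (gDmin (b j) - wgD x j)
        + mCup m j * (wgC x j - pC j - rCup (b j)) + mCdn m j * (pC j - wgC x j - rCdn (b j))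
        + mDup m j * (wgD x j - pD j - rDup (b j)) + mDdn m j * (pD j - wgD x j - rDdn (b j)))
     + (v - ?g) * (phi m i / xiD M i + pDup m i - pDdn m i + mDup m i - mDdn m i)"
    by (rule sum_upd2[OF i]) (auto simp: y_def algebra_simps diff_divide_distrib)
  let ?F = "\<lambda>z k tau j. phis m j tau k * (wEs z j tau k - prevS t (wE z) (wEs z) j tau k
                             - xiC M j * wgCs z j tau k + wgDs z j tau k / xiD M j)
        + eUps m j tau k * (wEs z j tau k - Emax (b j)) + eDns m j tau k * (Emin (b j) - wEs z j tau k)
        + pCups m j tau k * (wgCs z j tau k - gCmax (b j)) + pCdns m j tau k * (gCmin (b j) - wgCs z j tau k)
        + pDups m j tau k * (wgDs z j tau k - gDmax (b j)) + pDdns m j tau k * (gDmin (b j) - wgDs z j tau k)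
        + mCups m j tau k * (wgCs z j tau k - prevS t (wgC z) (wgCs z) j tau k - rCup (b j))
        + mCdns m j tau k * (prevS t (wgC z) (wgCs z) j tau k - wgCs z j tau k - rCdn (b j))
        + mDups m j tau k * (wgDs z j tau k - prevS t (wgD z) (wgDs z) j tau k - rDup (b j))
        + mDdns m j tau k * (prevS t (wgD z) (wgDs z) j tau k - wgDs z j tau k - rDdn (b j))"
  have pw: "?F y k tau j = ?F x k tau j + (if j = i then (if tau = Suc t then
              (v - ?g) * (mDdns m i (Suc t) k - mDups m i (Suc t) k) else 0) else 0)" for k tau j
    by (auto simp: y_def prevS_def algebra_simps)
  have A4: "(\<Sum>k<nK M. \<Sum>tau\<in>win M t. \<Sum>j<nN M. ?F y k tau j)
      = (\<Sum>k<nK M. \<Sum>tau\<in>win M t. \<Sum>j<nN M. ?F x k tau j)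
        + (v - ?g) * (if 2 \<le> nW M then (\<Sum>k<nK M. mDdns m i (Suc t) k - mDups m i (Suc t) k) else 0)"
    using i by (simp only: pw sum.distrib) (simp add: win_delta sum_distrib_left sum.distrib)
  show ?thesis
    unfolding wlag_def wcost_def
    apply (simp only: A1 A2 A3 A4)
    apply (simp add: y_def tlmpD_def DeltaD_def algebra_simps sum_subtractf sum_distrib_left)
    done
qed

lemma lagC:
  fixes x :: wdec and v :: real
  assumes i: "i < nN M"
  defines "y \<equiv> x\<lparr>wgC := (wgC x)(i := v)\<rparr>"
  shows "wlag M b t pE pC pD y m = wlag M b t pE pC pD x m
     + (v - wgC x i) * (tlmpC M m t i - cC (b i) + pCup m i - pCdn m i)"
proof -
  let ?g = "wgC x i"
  have A1: "(\<Sum>j<nN M. bidD (b j) (wgD y j) - bidC (b j) (wgC y j))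
      = (\<Sum>j<nN M. bidD (b j) (wgD x j) - bidC (b j) (wgC x j)) + (- (v - ?g) * cC (b i))"
    by (rule sum_upd2[OF i]) (auto simp: y_def bidC_def algebra_simps)
  have A2: "(\<Sum>j<nN M. wgD y j - wgC y j) = (\<Sum>j<nN M. wgD x j - wgC x j) + (- (v - ?g))"
    by (rule sum_upd2[OF i]) (auto simp: y_def algebra_simps)
  have A3: "(\<Sum>j<nN M.
          phi m j * (wE y j - pE j - xiC M j * wgC y j + wgD y j / xiD M j)
        + eUp m j * (wE y j - Emax (b j)) + eDn m j * (Emin (b j) - wE y j)
        + pCup m j * (wgC y j - gCmax (b j)) + pCdn m j * (gCmin (b j) - wgC y j)
        + pDup m j * (wgD y j - gDmax (b j)) + pDdn m j * (gDmin (b j) - wgD y j)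
        + mCup m j * (wgC y j - pC j - rCup (b j)) + mCdn m j * (pC j - wgC y j - rCdn (b j))
        + mDup m j * (wgD y j - pD j - rDup (b j)) + mDdn m j * (pD j - wgD y j - rDdn (b j)))
     = (\<Sum>j<nN M.
          phi m j * (wE x j - pE j - xiC M j * wgC x j + wgD x j / xiD M j)
        + eUp m j * (wE x j - Emax (b j)) + eDn m j * (Emin (b j) - wE x j)
        + pCup m j * (wgC x j - gCmax (b j)) + pCdn m j * (gCmin (b j) - wgC x j)
        + pDup m j * (wgD x j - gDmax (b j)) + pDdn m j * (gDmin (b j) - wgD x j)
        + mCup m j * (wgC x j - pC j - rCup (b j)) + mCdn m j * (pC j - wgC x j - rCdn (b j))
        + mDup m j * (wgD x j - pD j - rDup (b j)) + mDdn m j * (pD j - wgD x j - rDdn (b j)))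
     + (v - ?g) * (- phi m i * xiC M i + pCup m i - pCdn m i + mCup m i - mCdn m i)"
    by (rule sum_upd2[OF i]) (auto simp: y_def algebra_simps diff_divide_distrib)
  let ?F = "\<lambda>z k tau j. phis m j tau k * (wEs z j tau k - prevS t (wE z) (wEs z) j tau k
                             - xiC M j * wgCs z j tau k + wgDs z j tau k / xiD M j)
        + eUps m j tau k * (wEs z j tau k - Emax (b j)) + eDns m j tau k * (Emin (b j) - wEs z j tau k)
        + pCups m j tau k * (wgCs z j tau k - gCmax (b j)) + pCdns m j tau k * (gCmin (b j) - wgCs z j tau k)
        + pDups m j tau k * (wgDs z j tau k - gDmax (b j)) + pDdns m j tau k * (gDmin (b j) - wgDs z j tau k)
        + mCups m j tau k * (wgCs z j tau k - prevS t (wgC z) (wgCs z) j tau k - rCup (b j))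
        + mCdns m j tau k * (prevS t (wgC z) (wgCs z) j tau k - wgCs z j tau k - rCdn (b j))
        + mDups m j tau k * (wgDs z j tau k - prevS t (wgD z) (wgDs z) j tau k - rDup (b j))
        + mDdns m j tau k * (prevS t (wgD z) (wgDs z) j tau k - wgDs z j tau k - rDdn (b j))"
  have pw: "?F y k tau j = ?F x k tau j + (if j = i then (if tau = Suc t then
              (v - ?g) * (mCdns m i (Suc t) k - mCups m i (Suc t) k) else 0) else 0)" for k tau j
    by (auto simp: y_def prevS_def algebra_simps)
  have A4: "(\<Sum>k<nK M. \<Sum>tau\<in>win M t. \<Sum>j<nN M. ?F y k tau j)
      = (\<Sum>k<nK M. \<Sum>tau\<in>win M t. \<Sum>j<nN M. ?F x k tau j)
        + (v - ?g) * (if 2 \<le> nW M then (\<Sum>k<nK M. mCdns m i (Suc t) k - mCups m i (Suc t) k) else 0)"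
    using i by (simp only: pw sum.distrib) (simp add: win_delta sum_distrib_left sum.distrib)
  show ?thesis
    unfolding wlag_def wcost_def
    apply (simp only: A1 A2 A3 A4)
    apply (simp add: y_def tlmpC_def DeltaC_def algebra_simps sum_subtractf sum_distrib_left)
    done
qed

lemma kktD:
  assumes k: "wkkt M b t pE pC pD x m" and i: "i < nN M"
    and v: "gDmin (b i) \<le> v" "v \<le> gDmax (b i)"
  shows "(tlmpD M m t i - cD (b i)) * (v - wgD x i) \<le> 0"
proof -
  let ?y = "x\<lparr>wgD := (wgD x)(i := v)\<rparr>"
  have "wlag M b t pE pC pD x m \<le> wlag M b t pE pC pD ?y m"
    using k unfolding wkkt_def by blast
  then have h: "0 \<le> (v - wgD x i) * (cD (b i) - tlmpD M m t i + pDup m i - pDdn m i)"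
    using lagD[OF i, where b=b and t=t and pE=pE and pC=pC and pD=pD and x=x and v=v and m=m] by simp
  have cs: "0 \<le> pDup m i" "0 \<le> pDdn m i" "pDup m i * (wgD x i - gDmax (b i)) = 0"
      "pDdn m i * (gDmin (b i) - wgD x i) = 0"
    using k i unfolding wkkt_def by auto
  have e1: "(v - wgD x i) * pDup m i = pDup m i * (v - gDmax (b i))"
    using cs(3) by (simp add: right_diff_distrib mult.commute)
  have e2: "(v - wgD x i) * pDdn m i = pDdn m i * (v - gDmin (b i))"
    using cs(4) by (auto simp: right_diff_distrib mult.commute)
  have "pDup m i * (v - gDmax (b i)) \<le> 0" using cs(1) v(2) by (simp add: mult_nonneg_nonpos)
  moreover have "pDdn m i * (v - gDmin (b i)) \<ge> 0" using cs(2) v(1) by simp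
  moreover have "(v - wgD x i) * (cD (b i) - tlmpD M m t i + pDup m i - pDdn m i)
     = (v - wgD x i) * (cD (b i) - tlmpD M m t i) + (v - wgD x i) * pDup m i - (v - wgD x i) * pDdn m i"
    by (simp add: algebra_simps)
  moreover have "(tlmpD M m t i - cD (b i)) * (v - wgD x i) = - ((v - wgD x i) * (cD (b i) - tlmpD M m t i))"
    by (simp add: algebra_simps)
  ultimately show ?thesis using h e1 e2 by linarith
qed

lemma kktC:
  assumes k: "wkkt M b t pE pC pD x m" and i: "i < nN M"
    and v: "gCmin (b i) \<le> v" "v \<le> gCmax (b i)"
  shows "(tlmpC M m t i - cC (b i)) * (v - wgC x i) \<ge> 0"
proof -
  let ?y = "x\<lparr>wgC := (wgC x)(i := v)\<rparr>"
  have "wlag M b t pE pC pD x m \<le> wlag M b t pE pC pD ?y m"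
    using k unfolding wkkt_def by blast
  then have h: "0 \<le> (v - wgC x i) * (tlmpC M m t i - cC (b i) + pCup m i - pCdn m i)"
    using lagC[OF i, where b=b and t=t and pE=pE and pC=pC and pD=pD and x=x and v=v and m=m] by simp
  have cs: "0 \<le> pCup m i" "0 \<le> pCdn m i" "pCup m i * (wgC x i - gCmax (b i)) = 0"
      "pCdn m i * (gCmin (b i) - wgC x i) = 0"
    using k i unfolding wkkt_def by auto
  have e1: "(v - wgC x i) * pCup m i = pCup m i * (v - gCmax (b i))"
    using cs(3) by (simp add: right_diff_distrib mult.commute)
  have e2: "(v - wgC x i) * pCdn m i = pCdn m i * (v - gCmin (b i))"
    using cs(4) by (auto simp: right_diff_distrib mult.commute)
  have "pCup m i * (v - gCmax (b i)) \<le> 0" using cs(1) v(2) by (simp add: mult_nonneg_nonpos)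
  moreover have "pCdn m i * (v - gCmin (b i)) \<ge> 0" using cs(2) v(1) by simp
  moreover have "(v - wgC x i) * (tlmpC M m t i - cC (b i) + pCup m i - pCdn m i)
     = (v - wgC x i) * (tlmpC M m t i - cC (b i)) + (v - wgC x i) * pCup m i - (v - wgC x i) * pCdn m i"
    by (simp add: algebra_simps)
  moreover have "(tlmpC M m t i - cC (b i)) * (v - wgC x i) = ((v - wgC x i) * (tlmpC M m t i - cC (b i)))"
    by (simp add: algebra_simps)
  ultimately show ?thesis using h e1 e2 by linarith
qed


theorem theorem3:
  fixes M :: market and i :: nat and thstar th :: bid and others :: "nat \<Rightarrow> bid"
    and X Xdev :: "nat \<Rightarrow> wdec" and Mu :: "nat \<Rightarrow> wmult"
  assumes "i < nN M"
    and "1 \<le> nW M"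
    and "\<forall>j<nN M. 0 < xiC M j \<and> xiC M j \<le> 1 \<and> 0 < xiD M j \<and> xiD M j \<le> 1"
    and "\<forall>t. (\<forall>k<nK M. 0 \<le> prob M t k) \<and> (\<Sum>k<nK M. prob M t k) = 1"
    and truthful: "rw_run_mult M (others(i := thstar)) X Mu"
    and deviation: "rw_run M (others(i := th)) Xdev"
    and followable: "true_feasible M i thstar (dispC M Xdev i) (dispD M Xdev i)"
  shows "profit M thstar (\<lambda>t. tlmpC M (Mu t) t i) (\<lambda>t. tlmpD M (Mu t) t i)
            (dispC M Xdev i) (dispD M Xdev i)
         \<le> profit M thstar (\<lambda>t. tlmpC M (Mu t) t i) (\<lambda>t. tlmpD M (Mu t) t i)
            (dispC M X i) (dispD M X i)"
proof -
  let ?b = "others(i := thstar)"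
  have bi: "?b i = thstar" by simp
  from followable obtain sE where fe: "\<forall>t\<in>{1..nT M}.
        gCmin thstar \<le> dispC M Xdev i t \<and> dispC M Xdev i t \<le> gCmax thstar \<and>
        gDmin thstar \<le> dispD M Xdev i t \<and> dispD M Xdev i t \<le> gDmax thstar"
    unfolding true_feasible_def by blast
  show ?thesis unfolding profit_def
  proof (rule sum_mono)
    fix t assume t: "t \<in> {1..nT M}"
    let ?pC = "tlmpC M (Mu t) t i" and ?pD = "tlmpD M (Mu t) t i"
    let ?uC = "dispC M Xdev i t" and ?uD = "dispD M Xdev i t"
    let ?gC = "wgC (X t) i" and ?gD = "wgD (X t) i"
    have k: "wkkt M ?b t (\<lambda>i. seqE M X i (t - 1)) (\<lambda>i. dispC M X i (t - 1)) (\<lambda>i. dispD M X i (t - 1)) (X t) (Mu t)"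
      using truthful t unfolding rw_run_mult_def by blast
    have bnd: "gCmin (?b i) \<le> ?uC" "?uC \<le> gCmax (?b i)" "gDmin (?b i) \<le> ?uD" "?uD \<le> gDmax (?b i)"
      using fe t by auto
    have hD: "(?pD - cD thstar) * (?uD - ?gD) \<le> 0"
      using kktD[OF k assms(1) bnd(3,4)] by simp
    have hC: "(?pC - cC thstar) * (?uC - ?gC) \<ge> 0"
      using kktC[OF k assms(1) bnd(1,2)] by simp
    have eX: "dispC M X i t = ?gC" "dispD M X i t = ?gD" using t by (auto simp: dispC_def dispD_def)
    have "?pD * ?uD - ?pC * ?uC - bidD thstar ?uD + bidC thstar ?uC
        = (?pD * ?gD - ?pC * ?gC - bidD thstar ?gD + bidC thstar ?gC)
          + (?pD - cD thstar) * (?uD - ?gD) - (?pC - cC thstar) * (?uC - ?gC)"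
      by (simp add: bidD_def bidC_def algebra_simps)
    then show "?pD * ?uD - ?pC * ?uC - bidD thstar ?uD + bidC thstar ?uC
        \<le> ?pD * dispD M X i t - ?pC * dispC M X i t - bidD thstar (dispD M X i t) + bidC thstar (dispC M X i t)"
      unfolding eX using hD hC by linarith
  qed
qed

end
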